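(* Let $D$ denote the set of variable network games $(v,\rho)\in\mathbb V^N\times\mathbb P^N$ such that $v$ is component additive. Then: (i) the Expected Myerson Value $\Psi^m$ is an allocation rule on the class of variable network games which, on $D$, satisfies component balance and the equal bargaining power property; and (ii) if $\Psi\colon\mathbb V^N\times\mathbb P^N\to\mathbb R^N$ is any allocation rule on the class of variable network games satisfying component balance and the equal bargaining power property for all $(v,\rho)\in D$, then $\Psi(v,\rho)=\Psi^m(v,\rho)$ for all $(v,\rho)\in D$. That is, $\Psi^m$ is the unique allocation rule on the class of component additive variable network games that satisfies component balance and the equal bargaining power property.
   Context: $N=\{1,\dots,n\}$ is a finite player set. A link is an unordered pair $ij=\{i,j\}$ of distinct players; $g_N$ is the set of all links; a network is any $g\subseteq g_N$; $\mathbb G^N$ is the set of all networks and $g_0=\varnothing$. For $g\in\mathbb G^N$: $N_i(g)=\{j\ne i: ij\in g\}$, $N(g)=\bigcup_i N_i(g)$ (players with at least one link in $g$), and $N_0(g)=N\setminus N(g)$ (isolated players). For $S\subseteq N$, $g|S=\{ij\in g: i,j\in S\}$. $g+ij=g\cup\{ij\}$, $g-ij=g\setminus\{ij\}$. A component of $g$ is a nonempty subnetwork $h\subseteq g$ that is connected (any two players of $N(h)$ are joined by a path in $h$) and maximal (if $i\in N(h)$ and $ij\in g$ then $ij\in h$); $C(g)$ is the set of components of $g$. A network formation probability distribution is a map $\rho\colon\mathbb G^N\to[0,1]$ with $\sum_{g}\rho(g)=1$; $\mathbb P^N$ is the set of these. $\mathbb G(\rho)=\{g:\rho(g)>0\}$,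 and the extent is $g(\rho)=\bigcup_{g\in\mathbb G(\rho)}g$. For a network $g$, the restriction $\rho_g\in\mathbb P^N$ is $\rho_g(h)=\sum_{h'\subseteq g_N\setminus g}\rho(h\cup h')$ if $h\subseteq g$ and $\rho_g(h)=0$ otherwise. For a link $ij$, $\rho^{-ij}=\rho_{g_N-ij}$. A network game is $v\colon\mathbb G^N\to\mathbb R$ with $v(\varnothing)=0$; $\mathbb V^N$ is the set of these. $v$ is component additive if $v(g)=\sum_{h\in C(g)}v(h)$ for all $g$. A variable network game is a pair $(v,\rho)\in\mathbb V^N\times\mathbb P^N$. An allocation rule on the class of variable network games is a map $\Psi\colon\mathbb V^N\times\mathbb P^N\to\mathbb R^N$ with $\Psi_i(v,\rho)=0$ for every $i\in N_0(g(\rho))$. It is component balanced (on $(v,\rho)$ with $v$ component additive) if for every component $h\in C(g(\rho))$: $\sum_{i\in N(h)}\Psi_i(v,\rho)=\sum_{g\in\mathbb G(\rho)}\rho(g)\,v(g\cap h)$. It satisfies the equal bargaining power property if for every link $ij\in g(\rho)$: $\Psi_i(v,\rho)-\Psi_i(v,\rho^{-ij})=\Psi_j(v,\rho)-\Psi_j(v,\rho^{-ij})$. The Myerson Value for network games is $Y^m_i(v,g)=\sum_{S\subseteq N\setminus\{i\}}\frac{\#S!\,(n-\#S-1)!}{n!}\,[v(g|(S\cup\{i\}))-v(g|S)]$. The Expected Myerson Value is $\Psi^m(v,\rho)=\sum_{g\in\mathbb G^N}\rho(g)\,Y^m(v,g)$. *)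

theory Defs
  imports Complex_Main
begin

text \<open>Players: the elements of a finite type 'n (the player set N is UNIV, n = card (UNIV :: 'n set)).\<close>

type_synonym 'n network = "'n set set"

definition is_link :: "'n set \<Rightarrow> bool" where
  "is_link l \<longleftrightarrow> (\<exists>i j. i \<noteq> j \<and> l = {i, j})"

definition gN :: "'n network" where
  "gN = {l. is_link l}"

definition networks :: "'n network set" where
  "networks = Pow gN"

definition Nbrs :: "'n network \<Rightarrow> 'n \<Rightarrow> 'n set" where
  "Nbrs g i = {j. j \<noteq> i \<and> {i, j} \<in> g}"

definition players :: "'n network \<Rightarrow> 'n set" where
  "players g = (\<Union>i. Nbrs g i)"

definition isolated :: "'n network \<Rightarrow> 'n set" where
  "isolated g = UNIV - players g"

definition restr :: "'n network \<Rightarrow> 'n set \<Rightarrow> 'n network" where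
  "restr g S = {l \<in> g. l \<subseteq> S}"

definition adj :: "'n network \<Rightarrow> ('n \<times> 'n) set" where
  "adj g = {(i, j). i \<noteq> j \<and> {i, j} \<in> g}"

definition comp_of :: "'n network \<Rightarrow> 'n \<Rightarrow> 'n network" where
  "comp_of g i = {l \<in> g. \<exists>j \<in> l. (i, j) \<in> (adj g)\<^sup>*}"

definition components :: "'n network \<Rightarrow> 'n network set" where
  "components g = {comp_of g i | i. i \<in> players g}"

definition is_prob :: "('n network \<Rightarrow> real) \<Rightarrow> bool" where
  "is_prob \<rho> \<longleftrightarrow> (\<forall>g. 0 \<le> \<rho> g \<and> \<rho> g \<le> 1) \<and> (\<forall>g. g \<notin> networks \<longrightarrow> \<rho> g = 0)
     \<and> (\<Sum>g\<in>networks. \<rho> g) = 1"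

definition support :: "('n network \<Rightarrow> real) \<Rightarrow> 'n network set" where
  "support \<rho> = {g. \<rho> g > 0}"

definition extent :: "('n network \<Rightarrow> real) \<Rightarrow> 'n network" where
  "extent \<rho> = \<Union>(support \<rho>)"

definition restrict_prob :: "('n network \<Rightarrow> real) \<Rightarrow> 'n network \<Rightarrow> ('n network \<Rightarrow> real)" where
  "restrict_prob \<rho> g = (\<lambda>h. if h \<subseteq> g then (\<Sum>h'\<in>Pow (gN - g). \<rho> (h \<union> h')) else 0)"

definition delete_link :: "('n network \<Rightarrow> real) \<Rightarrow> 'n set \<Rightarrow> ('n network \<Rightarrow> real)" where
  "delete_link \<rho> l = restrict_prob \<rho> (gN - {l})"

definition is_game :: "('n network \<Rightarrow> real) \<Rightarrow> bool" where
  "is_game v \<longleftrightarrow> v {} = 0"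

definition component_additive :: "('n network \<Rightarrow> real) \<Rightarrow> bool" where
  "component_additive v \<longleftrightarrow> (\<forall>g\<in>networks. v g = (\<Sum>h\<in>components g. v h))"

type_synonym 'n rule = "('n network \<Rightarrow> real) \<Rightarrow> ('n network \<Rightarrow> real) \<Rightarrow> 'n \<Rightarrow> real"

definition allocation_rule :: "('n::finite) rule \<Rightarrow> bool" where
  "allocation_rule \<Psi> \<longleftrightarrow> (\<forall>v \<rho>. is_game v \<longrightarrow> is_prob \<rho> \<longrightarrow>
      (\<forall>i \<in> isolated (extent \<rho>). \<Psi> v \<rho> i = 0))"

definition component_balanced_at :: "'n rule \<Rightarrow> ('n network \<Rightarrow> real) \<Rightarrow> ('n network \<Rightarrow> real) \<Rightarrow> bool" where
  "component_balanced_at \<Psi> v \<rho> \<longleftrightarrow> (\<forall>h \<in> components (extent \<rho>).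
      (\<Sum>i\<in>players h. \<Psi> v \<rho> i) = (\<Sum>g\<in>support \<rho>. \<rho> g * v (g \<inter> h)))"

definition equal_bargaining_at :: "'n rule \<Rightarrow> ('n network \<Rightarrow> real) \<Rightarrow> ('n network \<Rightarrow> real) \<Rightarrow> bool" where
  "equal_bargaining_at \<Psi> v \<rho> \<longleftrightarrow> (\<forall>i j. i \<noteq> j \<longrightarrow> {i, j} \<in> extent \<rho> \<longrightarrow>
      \<Psi> v \<rho> i - \<Psi> v (delete_link \<rho> {i, j}) i = \<Psi> v \<rho> j - \<Psi> v (delete_link \<rho> {i, j}) j)"

definition myerson :: "('n::finite network \<Rightarrow> real) \<Rightarrow> 'n network \<Rightarrow> 'n \<Rightarrow> real" where
  "myerson v g i = (\<Sum>S\<in>Pow (UNIV - {i}).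
      (fact (card S) * fact (card (UNIV :: 'n set) - card S - 1) / fact (card (UNIV :: 'n set)))
      * (v (restr g (S \<union> {i})) - v (restr g S)))"

definition expected_myerson :: "('n::finite) rule" where
  "expected_myerson v \<rho> i = (\<Sum>g\<in>networks. \<rho> g * myerson v g i)"

definition D :: "(('n network \<Rightarrow> real) \<times> ('n network \<Rightarrow> real)) set" where
  "D = {(v, \<rho>). is_game v \<and> is_prob \<rho> \<and> component_additive v}"

end

theory Submission
  imports Defs
begin


definition wS :: "nat \<Rightarrow> nat \<Rightarrow> real" where "wS n s = fact s * fact (n - s - 1) / fact n"
definition w1 :: "nat \<Rightarrow> nat \<Rightarrow> real" where "w1 n t = fact (t - 1) * fact (n - t) / fact n"
definition cC :: "nat \<Rightarrow> nat \<Rightarrow> real" where "cC n t = fact t * fact (n - t) / fact n"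

lemma pow_reindex:
  fixes i :: "'n::finite"
  shows "(\<Sum>S\<in>Pow(UNIV-{i}). f (insert i S)) = (\<Sum>T\<in>UNIV. if i \<in> T then f T else (0::real))"
proof -
  have inj: "inj_on (insert i) (Pow(UNIV-{i}))" by (auto simp: inj_on_def)
  have im: "insert i ` Pow(UNIV-{i}) = {T. i \<in> T}"
  proof
    show "{T. i \<in> T} \<subseteq> insert i ` Pow(UNIV-{i})"
    proof
      fix T assume "T \<in> {T. i \<in> T}"
      then have "T = insert i (T - {i})" by auto
      then show "T \<in> insert i ` Pow(UNIV-{i})" by blast
    qed
  qed auto
  have "(\<Sum>S\<in>Pow(UNIV-{i}). f (insert i S)) = (\<Sum>T\<in>{T. i \<in> T}. f T)"
    using sum.reindex[OF inj, of f] im by simp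
  also have "\<dots> = (\<Sum>T\<in>UNIV. if i \<in> T then f T else 0)"
    using sum.inter_filter[of UNIV f "\<lambda>T. i \<in> T"] by simp
  finally show ?thesis .
qed

lemma pow_compl:
  fixes i :: "'n::finite"
  shows "(\<Sum>S\<in>Pow(UNIV-{i}). f S) = (\<Sum>T\<in>UNIV. if i \<notin> T then f T else (0::real))"
proof -
  have "Pow(UNIV-{i}) = {T. i \<notin> T}" by auto
  then show ?thesis using sum.inter_filter[of UNIV f "\<lambda>T. i \<notin> T"] by simp
qed

lemma sum_if_mem:
  fixes T :: "'n::finite set"
  shows "(\<Sum>i\<in>UNIV. if i \<in> T then x else (0::real)) = real (card T) * x"
  by (simp add: sum.If_cases)

lemma sum_if_nmem:
  fixes T :: "'n::finite set"
  shows "(\<Sum>i\<in>UNIV. if i \<notin> T then x else (0::real)) = real (card (UNIV::'n set) - card T) * x"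
proof -
  have "(\<Sum>i\<in>UNIV. if i \<notin> T then x else (0::real)) = real (card (UNIV - T)) * x"
    by (simp add: sum.If_cases Compl_eq_Diff_UNIV set_diff_eq)
  then show ?thesis by (simp add: card_Diff_subset)
qed

lemma wS_insert:
  fixes i :: "'n::finite"
  assumes "i \<notin> S"
  shows "wS (card (UNIV::'n set)) (card S) = w1 (card (UNIV::'n set)) (card (insert i S))"
  using assms by (simp add: wS_def w1_def)

lemma shapley_eff:
  fixes u :: "'n::finite set \<Rightarrow> real"
  defines "n \<equiv> card (UNIV :: 'n set)"
  shows "(\<Sum>i\<in>UNIV. \<Sum>S\<in>Pow(UNIV-{i}). wS n (card S) * (u (insert i S) - u S)) = u UNIV - u {}"
proof -
  define X where "X T = cC n (card T) * u T" for T
  have A: "(\<Sum>i\<in>UNIV. \<Sum>S\<in>Pow(UNIV-{i}). wS n (card S) * u (insert i S)) = (\<Sum>T\<in>UNIV. X T) - X {}"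
  proof -
    have "(\<Sum>i\<in>UNIV. \<Sum>S\<in>Pow(UNIV-{i}). wS n (card S) * u (insert i S))
        = (\<Sum>i\<in>UNIV. \<Sum>S\<in>Pow(UNIV-{i}). w1 n (card (insert i S)) * u (insert i S))"
      by (intro sum.cong refl) (metis DiffD2 PowD n_def singletonI subsetD wS_insert)
    also have "\<dots> = (\<Sum>i\<in>UNIV. \<Sum>T\<in>UNIV. if i \<in> T then w1 n (card T) * u T else 0)"
      by (subst pow_reindex) simp
    also have "\<dots> = (\<Sum>T\<in>UNIV. \<Sum>i\<in>UNIV. if i \<in> T then w1 n (card T) * u T else 0)"
      by (rule sum.swap)
    also have "\<dots> = (\<Sum>T\<in>UNIV. real (card T) * (w1 n (card T) * u T))"
      by (simp add: sum_if_mem)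
    also have "\<dots> = (\<Sum>T\<in>UNIV. X T - (if T = {} then X {} else 0))"
    proof (intro sum.cong refl)
      fix T :: "'n set"
      show "real (card T) * (w1 n (card T) * u T) = X T - (if T = {} then X {} else 0)"
      proof (cases "T = {}")
        case False
        then obtain k where k: "card T = Suc k" by (metis card_0_eq finite not0_implies_Suc)
        show ?thesis using False by (simp add: X_def k w1_def cC_def)
      qed (simp add: X_def)
    qed
    also have "\<dots> = (\<Sum>T\<in>UNIV. X T) - X {}"
      by (simp add: sum_subtractf)
    finally show ?thesis .
  qed
  have B: "(\<Sum>i\<in>UNIV. \<Sum>S\<in>Pow(UNIV-{i}). wS n (card S) * u S) = (\<Sum>T\<in>UNIV. X T) - X UNIV"
  proof -
    have "(\<Sum>i\<in>UNIV. \<Sum>S\<in>Pow(UNIV-{i}). wS n (card S) * u S)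
        = (\<Sum>i\<in>UNIV. \<Sum>T\<in>UNIV. if i \<notin> T then wS n (card T) * u T else 0)"
      by (subst pow_compl) simp
    also have "\<dots> = (\<Sum>T\<in>UNIV. \<Sum>i\<in>UNIV. if i \<notin> T then wS n (card T) * u T else 0)"
      by (rule sum.swap)
    also have "\<dots> = (\<Sum>T\<in>UNIV. real (n - card T) * (wS n (card T) * u T))"
      by (simp add: sum_if_nmem n_def)
    also have "\<dots> = (\<Sum>T\<in>UNIV. X T - (if T = UNIV then X UNIV else 0))"
    proof (intro sum.cong refl)
      fix T :: "'n set"
      show "real (n - card T) * (wS n (card T) * u T) = X T - (if T = UNIV then X UNIV else 0)"
      proof (cases "T = UNIV")
        case False
        then have "card T < n" unfolding n_def by (simp add: psubsetI psubset_card_mono)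
        then obtain k where k: "n - card T = Suc k" by (metis Suc_diff_Suc)
        then have k2: "n - card T - 1 = k" by simp
        show ?thesis using False by (simp add: X_def k k2 wS_def cC_def)
      qed (simp add: X_def n_def)
    qed
    also have "\<dots> = (\<Sum>T\<in>UNIV. X T) - X UNIV"
      by (simp add: sum_subtractf)
    finally show ?thesis .
  qed
  have "(\<Sum>i\<in>UNIV. \<Sum>S\<in>Pow(UNIV-{i}). wS n (card S) * (u (insert i S) - u S))
      = (\<Sum>i\<in>UNIV. \<Sum>S\<in>Pow(UNIV-{i}). wS n (card S) * u (insert i S))
        - (\<Sum>i\<in>UNIV. \<Sum>S\<in>Pow(UNIV-{i}). wS n (card S) * u S)"
    by (simp add: right_diff_distrib sum_subtractf)
  also have "\<dots> = X UNIV - X {}" using A B by simp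
  also have "\<dots> = u UNIV - u {}" by (simp add: X_def cC_def n_def)
  finally show ?thesis .
qed



lemma myerson_alt:
  fixes i :: "'n::finite"
  shows "myerson v g i = (\<Sum>S\<in>Pow(UNIV-{i}). wS (card (UNIV::'n set)) (card S) * (v (restr g (insert i S)) - v (restr g S)))"
  unfolding myerson_def wS_def by (simp only: Un_insert_right Un_empty_right)

lemma gN_mem: "l \<in> gN \<longleftrightarrow> (\<exists>i j. i \<noteq> j \<and> l = {i, j})"
  by (simp add: gN_def is_link_def)

lemma players_iff: "a \<in> players g \<longleftrightarrow> (\<exists>b. b \<noteq> a \<and> {a, b} \<in> g)"
proof
  assume "a \<in> players g"
  then obtain x where "a \<noteq> x" "{x, a} \<in> g" by (auto simp: players_def Nbrs_def)
  moreover have "{x, a} = {a, x}" by blast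
  ultimately show "\<exists>b. b \<noteq> a \<and> {a, b} \<in> g" by metis
next
  assume "\<exists>b. b \<noteq> a \<and> {a, b} \<in> g"
  then obtain b where "b \<noteq> a" "{a, b} \<in> g" by blast
  moreover have "{b, a} = {a, b}" by blast
  ultimately have "a \<in> Nbrs g b" by (simp add: Nbrs_def)
  then show "a \<in> players g" by (auto simp: players_def)
qed

lemma mem_link_players:
  assumes "g \<subseteq> gN" "l \<in> g" "a \<in> l" shows "a \<in> players g"
proof -
  have "l \<in> gN" using assms(1,2) by (rule subsetD)
  then obtain x y where xy: "x \<noteq> y" "l = {x, y}" unfolding gN_mem by blast
  show ?thesis unfolding players_iff
  proof (cases "a = x")
    case True
    then show "\<exists>b. b \<noteq> a \<and> {a, b} \<in> g" using xy assms(2) by (intro exI[of _ y]) simp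
  next
    case False
    then have "a = y" using xy assms(3) by blast
    moreover have "{y, x} = {x, y}" by blast
    ultimately have "{a, x} \<in> g" using xy assms(2) by simp
    then show "\<exists>b. b \<noteq> a \<and> {a, b} \<in> g" using xy \<open>a = y\<close> by (intro exI[of _ x]) simp
  qed
qed

lemma players_mono: 
  assumes "g \<subseteq> g'" shows "players g \<subseteq> players g'"
proof
  fix a assume "a \<in> players g"
  then obtain b where "b \<noteq> a" "{a, b} \<in> g" using players_iff by metis
  then show "a \<in> players g'" using assms players_iff by (metis subsetD)
qed

lemma restr_null:
  assumes "g \<subseteq> gN" "i \<notin> players g"
  shows "restr g (insert i S) = restr g S"
proof -
  have "l \<subseteq> S" if "l \<in> g" "l \<subseteq> insert i S" for l
    using that assms(2) mem_link_players[OF assms(1) that(1), of i] by blast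
  then show ?thesis unfolding restr_def by auto
qed

lemma myerson_null:
  assumes "g \<subseteq> gN" "i \<notin> players g"
  shows "myerson v g i = 0"
  unfolding myerson_alt using restr_null[OF assms] by simp

lemma restr_UNIV: "restr g UNIV = g" by (simp add: restr_def)

lemma restr_empty: "g \<subseteq> gN \<Longrightarrow> restr g {} = {}"
  unfolding restr_def gN_def is_link_def by auto

lemma myerson_eff:
  assumes "g \<subseteq> gN"
  shows "(\<Sum>i\<in>UNIV. myerson v g i) = v g - v {}"
  unfolding myerson_alt using shapley_eff[of "\<lambda>S. v (restr g S)"]
  by (simp add: restr_UNIV restr_empty[OF assms])

lemma myerson_fair:
  fixes i j :: "'n::finite"
  assumes "i \<noteq> j"
  shows "myerson v g i - myerson v (g - {{i,j}}) i = myerson v g j - myerson v (g - {{i,j}}) j"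
proof -
  define n where "n = card (UNIV :: 'n set)"
  define d where "d S = v (restr g S) - v (restr (g - {{i,j}}) S)" for S
  have d0: "d S = 0" if "\<not> {i,j} \<subseteq> S" for S
  proof -
    have "restr g S = restr (g - {{i,j}}) S" using that unfolding restr_def by auto
    then show ?thesis by (simp add: d_def)
  qed
  have key: "myerson v g a - myerson v (g - {{i,j}}) a = (\<Sum>T\<in>UNIV. if {i,j} \<subseteq> T then w1 n (card T) * d T else 0)"
    if a: "a = i \<or> a = j" for a
  proof -
    have "myerson v g a - myerson v (g - {{i,j}}) a = (\<Sum>S\<in>Pow(UNIV-{a}). wS n (card S) * (d (insert a S) - d S))"
      unfolding myerson_alt n_def d_def by (simp add: sum_subtractf[symmetric] algebra_simps)
    also have "\<dots> = (\<Sum>S\<in>Pow(UNIV-{a}). w1 n (card (insert a S)) * d (insert a S))"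
    proof (intro sum.cong refl)
      fix S assume S: "S \<in> Pow(UNIV-{a})"
      then have "a \<notin> S" by auto
      then have "d S = 0" using a d0 by blast
      moreover have "wS n (card S) = w1 n (card (insert a S))" using \<open>a \<notin> S\<close> wS_insert n_def by metis
      ultimately show "wS n (card S) * (d (insert a S) - d S) = w1 n (card (insert a S)) * d (insert a S)" by simp
    qed
    also have "\<dots> = (\<Sum>T\<in>UNIV. if a \<in> T then w1 n (card T) * d T else 0)"
      by (rule pow_reindex)
    also have "\<dots> = (\<Sum>T\<in>UNIV. if {i,j} \<subseteq> T then w1 n (card T) * d T else 0)"
      proof (intro sum.cong refl)
      fix T :: "'n set"
      show "(if a \<in> T then w1 n (card T) * d T else 0) = (if {i,j} \<subseteq> T then w1 n (card T) * d T else 0)"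
        using a d0[of T] by auto
    qed
    finally show ?thesis .
  qed
  show ?thesis using key[of i] key[of j] by simp
qed




lemma link_other:
  assumes "g \<subseteq> gN" "l \<in> g" "a \<in> l"
  obtains b where "b \<noteq> a" "l = {a, b}"
proof -
  have "l \<in> gN" using assms(1,2) by (rule subsetD)
  then obtain x y where xy: "x \<noteq> y" "l = {x, y}" unfolding gN_mem by blast
  show ?thesis
  proof (cases "a = x")
    case True then show ?thesis using xy by (intro that[of y]) auto
  next
    case False
    then have "a = y" using xy assms(3) by blast
    moreover have "{x, y} = {y, x}" by blast
    ultimately show ?thesis using xy by (intro that[of x]) auto
  qed
qed

lemma reach_stays:
  assumes B: "B \<subseteq> gN" and C: "C \<subseteq> gN" and disj: "players B \<inter> players C = {}"
    and r: "(i, j) \<in> (adj (B \<union> C))\<^sup>*" and i: "i \<in> players B"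
  shows "(i, j) \<in> (adj B)\<^sup>* \<and> j \<in> players B"
  using r
proof (induction rule: rtrancl_induct)
  case base then show ?case using i by simp
next
  case (step y z)
  then have yz: "y \<noteq> z" "{y, z} \<in> B \<union> C" by (auto simp: adj_def)
  have "{y, z} \<notin> C"
  proof
    assume "{y, z} \<in> C"
    then have "y \<in> players C" using mem_link_players[OF C] by blast
    then show False using step disj by blast
  qed
  then have "{y, z} \<in> B" using yz by blast
  then have "(y, z) \<in> adj B" "z \<in> players B" using yz mem_link_players[OF B] by (auto simp: adj_def)
  then show ?case using step by (meson rtrancl_into_rtrancl)
qed

lemma adj_mono: "B \<subseteq> B' \<Longrightarrow> adj B \<subseteq> adj B'"
  by (auto simp: adj_def)

lemma comp_union:
  assumes B: "B \<subseteq> gN" and C: "C \<subseteq> gN" and disj: "players B \<inter> players C = {}"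
    and i: "i \<in> players B"
  shows "comp_of (B \<union> C) i = comp_of B i"
proof
  show "comp_of (B \<union> C) i \<subseteq> comp_of B i"
  proof
    fix l assume "l \<in> comp_of (B \<union> C) i"
    then obtain j where l: "l \<in> B \<union> C" "j \<in> l" "(i, j) \<in> (adj (B \<union> C))\<^sup>*" by (auto simp: comp_of_def)
    then have rj: "(i, j) \<in> (adj B)\<^sup>*" "j \<in> players B" using reach_stays[OF B C disj _ i] by auto
    have "l \<notin> C"
    proof
      assume "l \<in> C" then have "j \<in> players C" using mem_link_players[OF C] l by blast
      then show False using rj disj by blast
    qed
    then show "l \<in> comp_of B i" using l rj by (auto simp: comp_of_def)
  qed
next
  have "(adj B)\<^sup>* \<subseteq> (adj (B \<union> C))\<^sup>*" by (rule rtrancl_mono) (rule adj_mono, blast)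
  then show "comp_of B i \<subseteq> comp_of (B \<union> C) i" by (auto simp: comp_of_def)
qed

lemma players_Un: "players (B \<union> C) = players B \<union> players C"
  by (auto simp: players_def Nbrs_def)

lemma components_union:
  assumes B: "B \<subseteq> gN" and C: "C \<subseteq> gN" and disj: "players B \<inter> players C = {}"
  shows "components (B \<union> C) = components B \<union> components C"
proof -
  have disj': "players C \<inter> players B = {}" using disj by blast
  have "components (B \<union> C) = {comp_of (B \<union> C) i | i. i \<in> players B \<union> players C}"
    by (simp add: components_def players_Un)
  also have "\<dots> = {comp_of B i | i. i \<in> players B} \<union> {comp_of C i | i. i \<in> players C}"
  proof -
    have "comp_of (B \<union> C) i = comp_of B i" if "i \<in> players B" for i
      using comp_union[OF B C disj that] .
    moreover have "comp_of (B \<union> C) i = comp_of C i" if "i \<in> players C" for i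
      using comp_union[OF C B disj' that] by (simp add: Un_commute)
    ultimately show ?thesis by blast
  qed
  finally show ?thesis by (simp add: components_def)
qed

lemma comp_sub: "comp_of g i \<subseteq> g" by (auto simp: comp_of_def)

lemma comp_nonempty:
  assumes "i \<in> players g" shows "comp_of g i \<noteq> {}"
proof -
  obtain b where "b \<noteq> i" "{i, b} \<in> g" using assms players_iff by metis
  then have "{i, b} \<in> comp_of g i" by (auto simp: comp_of_def)
  then show ?thesis by blast
qed

lemma ca_union:
  fixes B C :: "'n::finite network"
  assumes ca: "component_additive v" and B: "B \<subseteq> gN" and C: "C \<subseteq> gN"
    and disj: "players B \<inter> players C = {}"
  shows "v (B \<union> C) = v B + v C"
proof -
  have BC: "B \<inter> C = {}"
  proof (rule ccontr)
    assume "B \<inter> C \<noteq> {}"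
    then obtain l where l: "l \<in> B" "l \<in> C" by blast
    have "l \<in> gN" using B l by blast
    then obtain x y where "x \<noteq> y" "l = {x, y}" unfolding gN_mem by blast
    then have "x \<in> l" by simp
    then have "x \<in> players B" "x \<in> players C" using mem_link_players[OF B] mem_link_players[OF C] l by blast+
    then show False using disj by blast
  qed
  have cd: "components B \<inter> components C = {}"
  proof (rule ccontr)
    assume "components B \<inter> components C \<noteq> {}"
    then obtain h where "h \<in> components B" "h \<in> components C" by blast
    then obtain i i' where "h = comp_of B i" "i \<in> players B" "h = comp_of C i'" by (auto simp: components_def)
    then have "h \<noteq> {}" "h \<subseteq> B" "h \<subseteq> C" using comp_nonempty comp_sub by metis+
    then show False using BC by blast
  qed
  have net: "B \<in> networks" "C \<in> networks" "B \<union> C \<in> networks" using B C by (auto simp: networks_def)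
  have "v (B \<union> C) = (\<Sum>h\<in>components B \<union> components C. v h)"
    using ca net components_union[OF B C disj] by (simp add: component_additive_def)
  also have "\<dots> = (\<Sum>h\<in>components B. v h) + (\<Sum>h\<in>components C. v h)"
    by (rule sum.union_disjoint) (use cd in auto)
  also have "\<dots> = v B + v C" using ca net by (simp add: component_additive_def)
  finally show ?thesis .
qed

lemma comp_reach:
  assumes "a \<in> players (comp_of E k)" "E \<subseteq> gN"
  shows "(k, a) \<in> (adj E)\<^sup>*"
proof -
  obtain b where b: "b \<noteq> a" "{a, b} \<in> comp_of E k" using assms players_iff by metis
  then obtain j where j: "j \<in> {a, b}" "(k, j) \<in> (adj E)\<^sup>*" "{a, b} \<in> E" by (auto simp: comp_of_def)
  show ?thesis
  proof (cases "j = a")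
    case True then show ?thesis using j by simp
  next
    case False
    then have "j = b" using j by blast
    moreover have "{b, a} = {a, b}" by blast
    moreover have "(b, a) \<in> adj E" using b j calculation(2) unfolding adj_def by simp
    ultimately show ?thesis using j by (meson rtrancl_into_rtrancl)
  qed
qed

lemma comp_closed:
  assumes "E \<subseteq> gN" "l \<in> E" "a \<in> l" "a \<in> players (comp_of E k)"
  shows "l \<in> comp_of E k"
  using comp_reach[OF assms(4,1)] assms(2,3) by (auto simp: comp_of_def)



lemma players_outside:
  assumes E: "E \<subseteq> gN" and g: "g \<subseteq> E" and a: "a \<in> players (comp_of E k)"
  shows "a \<notin> players (g - comp_of E k)"
proof
  assume "a \<in> players (g - comp_of E k)"
  then obtain b where b: "b \<noteq> a" "{a, b} \<in> g - comp_of E k" using players_iff by metis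
  then have "{a, b} \<in> comp_of E k" using comp_closed[OF E _ _ a, of "{a,b}"] g by blast
  then show False using b by blast
qed

lemma myerson_split:
  fixes g E :: "'n::finite network"
  assumes ca: "component_additive v" and E: "E \<subseteq> gN" and g: "g \<subseteq> E"
  shows "myerson v g i = myerson v (g \<inter> comp_of E k) i + myerson v (g - comp_of E k) i"
proof -
  define h where "h = comp_of E k"
  have split: "v (restr g S) = v (restr (g \<inter> h) S) + v (restr (g - h) S)" for S
  proof -
    have un: "restr g S = restr (g \<inter> h) S \<union> restr (g - h) S" by (auto simp: restr_def)
    have sB: "restr (g \<inter> h) S \<subseteq> gN" "restr (g - h) S \<subseteq> gN" using E g by (auto simp: restr_def)
    have "players (restr (g \<inter> h) S) \<subseteq> players h" by (rule players_mono) (auto simp: restr_def)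
    moreover have "players (restr (g - h) S) \<subseteq> players (g - h)" by (rule players_mono) (auto simp: restr_def)
    moreover have "players (g - h) \<inter> players h = {}" using players_outside[OF E g] h_def by blast
    ultimately have "players (restr (g \<inter> h) S) \<inter> players (restr (g - h) S) = {}" by blast
    then show ?thesis using ca_union[OF ca sB] un by simp
  qed
  show ?thesis unfolding myerson_alt h_def[symmetric] split
    by (simp add: sum.distrib[symmetric] algebra_simps)
qed

lemma myerson_comp_sum:
  fixes g E :: "'n::finite network"
  assumes ca: "component_additive v" and game: "is_game v" and E: "E \<subseteq> gN" and g: "g \<subseteq> E"
  shows "(\<Sum>a\<in>players (comp_of E k). myerson v g a) = v (g \<inter> comp_of E k)"
proof -
  define h where "h = comp_of E k"
  have gh: "g \<inter> h \<subseteq> gN" "g - h \<subseteq> gN" using E g by auto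
  have "(\<Sum>a\<in>players h. myerson v g a) = (\<Sum>a\<in>players h. myerson v (g \<inter> h) a)"
  proof (intro sum.cong refl)
    fix a assume a: "a \<in> players h"
    have "myerson v (g - h) a = 0" using myerson_null[OF gh(2)] players_outside[OF E g] a h_def by blast
    then show "myerson v g a = myerson v (g \<inter> h) a" using myerson_split[OF ca E g, of a k] h_def by simp
  qed
  also have "\<dots> = (\<Sum>a\<in>UNIV. myerson v (g \<inter> h) a)"
  proof (rule sum.mono_neutral_left)
    show "\<forall>i\<in>UNIV - players h. myerson v (g \<inter> h) i = 0"
    proof
      fix i assume "i \<in> UNIV - players h"
      moreover have "players (g \<inter> h) \<subseteq> players h" by (rule players_mono) blast
      ultimately show "myerson v (g \<inter> h) i = 0" using myerson_null[OF gh(1)] by blast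
    qed
  qed auto
  also have "\<dots> = v (g \<inter> h)" using myerson_eff[OF gh(1)] game by (simp add: is_game_def)
  finally show ?thesis by (simp add: h_def)
qed

lemma dl_eq:
  assumes l: "l \<in> gN"
  shows "delete_link \<rho> l h = (if h \<subseteq> gN - {l} then \<rho> h + \<rho> (insert l h) else 0)"
proof -
  have "gN - (gN - {l}) = {l}" using l by blast
  moreover have "Pow {l} = {{}, {l}}" by blast
  moreover have "({}::'a set set) \<noteq> {l}" by blast
  ultimately show ?thesis unfolding delete_link_def restrict_prob_def by simp
qed

lemma sum_dl:
  fixes F :: "'n::finite network \<Rightarrow> real"
  assumes l: "l \<in> gN"
  shows "(\<Sum>g\<in>networks. delete_link \<rho> l g * F g) = (\<Sum>g\<in>networks. \<rho> g * F (g - {l}))"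
proof -
  define P0 where "P0 = Pow (gN - {l})"
  have nets: "networks = P0 \<union> insert l ` P0"
  proof -
    have "gN = insert l (gN - {l})" using l by blast
    then show ?thesis unfolding networks_def P0_def by (metis Pow_insert)
  qed
  have disj: "P0 \<inter> insert l ` P0 = {}" unfolding P0_def by auto
  have inj: "inj_on (insert l) P0" unfolding P0_def inj_on_def by auto
  have "(\<Sum>g\<in>networks. delete_link \<rho> l g * F g) = (\<Sum>g\<in>networks. if g \<in> P0 then (\<rho> g + \<rho> (insert l g)) * F g else 0)"
    by (intro sum.cong refl) (simp add: dl_eq[OF l] P0_def)
  also have "\<dots> = (\<Sum>g\<in>P0. (\<rho> g + \<rho> (insert l g)) * F g)"
    by (simp add: sum.If_cases nets Int_absorb1)
  also have "\<dots> = (\<Sum>g\<in>P0. \<rho> g * F g) + (\<Sum>g\<in>P0. \<rho> (insert l g) * F g)"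
    by (simp add: sum.distrib algebra_simps)
  also have "(\<Sum>g\<in>P0. \<rho> (insert l g) * F g) = (\<Sum>g\<in>insert l ` P0. \<rho> g * F (g - {l}))"
  proof -
    have "(\<Sum>g\<in>insert l ` P0. \<rho> g * F (g - {l})) = (\<Sum>g\<in>P0. \<rho> (insert l g) * F (insert l g - {l}))"
      using sum.reindex[OF inj, of "\<lambda>g. \<rho> g * F (g - {l})"] by (simp only: comp_def)
    also have "\<dots> = (\<Sum>g\<in>P0. \<rho> (insert l g) * F g)"
    proof (intro sum.cong refl)
      fix g assume "g \<in> P0"
      then have "l \<notin> g" by (auto simp: P0_def)
      then have "insert l g - {l} = g" by simp
      then show "\<rho> (insert l g) * F (insert l g - {l}) = \<rho> (insert l g) * F g" by simp
    qed
    finally show ?thesis by simp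
  qed
  also have "(\<Sum>g\<in>P0. \<rho> g * F g) = (\<Sum>g\<in>P0. \<rho> g * F (g - {l}))"
  proof (intro sum.cong refl)
    fix g assume "g \<in> P0"
    then have "l \<notin> g" by (auto simp: P0_def)
    then have "g - {l} = g" by simp
    then show "\<rho> g * F g = \<rho> g * F (g - {l})" by simp
  qed
  also have "\<dots> + (\<Sum>g\<in>insert l ` P0. \<rho> g * F (g - {l})) = (\<Sum>g\<in>networks. \<rho> g * F (g - {l}))"
    unfolding nets by (rule sum.union_disjoint[symmetric]) (use disj in auto)
  finally show ?thesis .
qed



lemma prob_nz_net: "is_prob \<rho> \<Longrightarrow> \<rho> g \<noteq> 0 \<Longrightarrow> g \<in> networks"
  unfolding is_prob_def by blast

lemma support_sub: "is_prob \<rho> \<Longrightarrow> g \<in> support \<rho> \<Longrightarrow> g \<subseteq> extent \<rho>"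
  unfolding extent_def by blast

lemma extent_gN: "is_prob \<rho> \<Longrightarrow> extent \<rho> \<subseteq> gN"
  unfolding extent_def support_def networks_def is_prob_def by force

lemma is_prob_dl:
  fixes \<rho> :: "'n::finite network \<Rightarrow> real"
  assumes p: "is_prob \<rho>" and l: "l \<in> gN"
  shows "is_prob (delete_link \<rho> l)"
proof -
  have nn: "0 \<le> \<rho> g" for g using p by (simp add: is_prob_def)
  have s1: "(\<Sum>g\<in>networks. \<rho> g) = 1" using p by (simp add: is_prob_def)
  have le1: "delete_link \<rho> l h \<le> 1" for h
  proof (cases "h \<subseteq> gN - {l}")
    case True
    then have ne: "h \<noteq> insert l h" by blast
    have sub: "{h, insert l h} \<subseteq> networks" using True l by (auto simp: networks_def)
    have "\<rho> h + \<rho> (insert l h) = (\<Sum>g\<in>{h, insert l h}. \<rho> g)" using ne by simp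
    also have "\<dots> \<le> (\<Sum>g\<in>networks. \<rho> g)" by (rule sum_mono2) (use sub nn in auto)
    finally show ?thesis using True s1 by (simp add: dl_eq[OF l])
  qed (simp add: dl_eq[OF l])
  have "(\<Sum>g\<in>networks. delete_link \<rho> l g) = (\<Sum>g\<in>networks. delete_link \<rho> l g * 1)" by simp
  also have "\<dots> = (\<Sum>g\<in>networks. \<rho> g * 1)" by (rule sum_dl[OF l])
  finally have "(\<Sum>g\<in>networks. delete_link \<rho> l g) = 1" using s1 by simp
  moreover have "0 \<le> delete_link \<rho> l g" for g using nn by (simp add: dl_eq[OF l] add_nonneg_nonneg)
  moreover have "delete_link \<rho> l g = 0" if "g \<notin> networks" for g
    using that by (auto simp: dl_eq[OF l] networks_def)
  ultimately show ?thesis using le1 by (simp add: is_prob_def)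
qed

lemma extent_dl:
  assumes p: "is_prob \<rho>" and l: "l \<in> gN"
  shows "extent (delete_link \<rho> l) \<subseteq> extent \<rho> - {l}"
proof
  fix x assume "x \<in> extent (delete_link \<rho> l)"
  then obtain h where h: "x \<in> h" "delete_link \<rho> l h > 0" by (auto simp: extent_def support_def)
  then have hs: "h \<subseteq> gN - {l}" "\<rho> h + \<rho> (insert l h) > 0" by (auto simp: dl_eq[OF l] split: if_splits)
  have nn: "0 \<le> \<rho> g" for g using p by (simp add: is_prob_def)
  have "\<rho> h > 0 \<or> \<rho> (insert l h) > 0" using hs(2) nn[of h] nn[of "insert l h"] by linarith
  then have "x \<in> extent \<rho>" using h(1) by (auto simp: extent_def support_def)
  then show "x \<in> extent \<rho> - {l}" using hs h by blast
qed

lemma em_dl: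
  fixes \<rho> :: "'n::finite network \<Rightarrow> real"
  assumes l: "l \<in> gN"
  shows "expected_myerson v (delete_link \<rho> l) i = (\<Sum>g\<in>networks. \<rho> g * myerson v (g - {l}) i)"
  unfolding expected_myerson_def by (rule sum_dl[OF l])

lemma em_alloc:
  fixes \<rho> :: "'n::finite network \<Rightarrow> real"
  assumes p: "is_prob \<rho>" and i: "i \<in> isolated (extent \<rho>)"
  shows "expected_myerson v \<rho> i = 0"
  unfolding expected_myerson_def
proof (rule sum.neutral, rule ballI)
  fix g :: "'n network" assume g: "g \<in> networks"
  show "\<rho> g * myerson v g i = 0"
  proof (cases "\<rho> g = 0")
    case False
    moreover have "\<rho> g \<ge> 0" using p by (simp add: is_prob_def)
    ultimately have "\<rho> g > 0" by linarith
    then have "g \<subseteq> extent \<rho>" by (auto simp: extent_def support_def)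
    then have "i \<notin> players g" using i players_mono by (auto simp: isolated_def)
    moreover have "g \<subseteq> gN" using g by (simp add: networks_def)
    ultimately show ?thesis using myerson_null[of g i v] by simp
  qed simp
qed

lemma em_cb:
  fixes \<rho> :: "'n::finite network \<Rightarrow> real"
  assumes p: "is_prob \<rho>" and ca: "component_additive v" and game: "is_game v"
  shows "component_balanced_at expected_myerson v \<rho>"
  unfolding component_balanced_at_def
proof
  fix h assume "h \<in> components (extent \<rho>)"
  then obtain k where h: "h = comp_of (extent \<rho>) k" by (auto simp: components_def)
  have E: "extent \<rho> \<subseteq> gN" by (rule extent_gN[OF p])
  have nn: "0 \<le> \<rho> g" for g using p by (simp add: is_prob_def)
  have "(\<Sum>a\<in>players h. expected_myerson v \<rho> a) = (\<Sum>g\<in>networks. \<rho> g * (\<Sum>a\<in>players h. myerson v g a))"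
    unfolding expected_myerson_def by (simp add: sum_distrib_left sum.swap[of _ "players h"])
  also have "\<dots> = (\<Sum>g\<in>networks. \<rho> g * v (g \<inter> h))"
  proof (intro sum.cong refl)
    fix g :: "'n network" assume g: "g \<in> networks"
    show "\<rho> g * (\<Sum>a\<in>players h. myerson v g a) = \<rho> g * v (g \<inter> h)"
    proof (cases "\<rho> g = 0")
      case False
      then have "\<rho> g > 0" using nn[of g] by linarith
      then have "g \<subseteq> extent \<rho>" by (auto simp: extent_def support_def)
      then show ?thesis using myerson_comp_sum[OF ca game E, of g k] h by simp
    qed simp
  qed
  also have "\<dots> = (\<Sum>g\<in>support \<rho>. \<rho> g * v (g \<inter> h))"
  proof (rule sum.mono_neutral_right)
    show "support \<rho> \<subseteq> networks" using p by (auto simp: support_def is_prob_def)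
    show "\<forall>g\<in>networks - support \<rho>. \<rho> g * v (g \<inter> h) = 0"
      using nn by (auto simp: support_def order_le_less)
  qed auto
  finally show "(\<Sum>i\<in>players h. expected_myerson v \<rho> i) = (\<Sum>g\<in>support \<rho>. \<rho> g * v (g \<inter> h))" .
qed

lemma em_eb:
  fixes \<rho> :: "'n::finite network \<Rightarrow> real"
  assumes p: "is_prob \<rho>"
  shows "equal_bargaining_at expected_myerson v \<rho>"
  unfolding equal_bargaining_at_def
proof (intro allI impI)
  fix i j :: 'n assume ij: "i \<noteq> j" "{i, j} \<in> extent \<rho>"
  have l: "{i,j} \<in> gN" using ij extent_gN[OF p] by blast
  have "expected_myerson v \<rho> a - expected_myerson v (delete_link \<rho> {i, j}) a
     = (\<Sum>g\<in>networks. \<rho> g * (myerson v g a - myerson v (g - {{i,j}}) a))" for a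
    unfolding em_dl[OF l] unfolding expected_myerson_def
    by (simp add: sum_subtractf[symmetric] algebra_simps)
  then show "expected_myerson v \<rho> i - expected_myerson v (delete_link \<rho> {i, j}) i =
       expected_myerson v \<rho> j - expected_myerson v (delete_link \<rho> {i, j}) j"
    using myerson_fair[OF ij(1)] by simp
qed



lemma self_in_comp:
  assumes "i \<in> players g" shows "i \<in> players (comp_of g i)"
proof -
  obtain b where "b \<noteq> i" "{i, b} \<in> g" using assms players_iff by metis
  then have "{i, b} \<in> comp_of g i" "b \<noteq> i" by (auto simp: comp_of_def)
  then show ?thesis using players_iff by metis
qed

lemma uniq:
  fixes \<Psi> :: "'n::finite rule"
  assumes alloc: "allocation_rule \<Psi>"
    and hyp: "\<forall>(v, \<rho>) \<in> D. component_balanced_at \<Psi> v \<rho> \<and> equal_bargaining_at \<Psi> v \<rho>"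
    and game: "is_game v" and ca: "component_additive v"
  shows "is_prob \<rho> \<Longrightarrow> \<Psi> v \<rho> = expected_myerson v \<rho>"
proof (induction "card (extent \<rho>)" arbitrary: \<rho> rule: less_induct)
  case less
  note p = less.prems
  define E where "E = extent \<rho>"
  have EgN: "E \<subseteq> gN" using extent_gN[OF p] E_def by simp
  have inD: "(v, \<rho>') \<in> D" if "is_prob \<rho>'" for \<rho>' using that game ca by (simp add: D_def)
  define \<Phi> where "\<Phi> a = \<Psi> v \<rho> a - expected_myerson v \<rho> a" for a
  have link: "\<Phi> i = \<Phi> j" if ij: "i \<noteq> j" "{i, j} \<in> E" for i j
  proof -
    define l where "l = {i, j}"
    have l: "l \<in> gN" using ij EgN l_def by blast
    have pd: "is_prob (delete_link \<rho> l)" by (rule is_prob_dl[OF p l])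
    have "extent (delete_link \<rho> l) \<subset> extent \<rho>" using extent_dl[OF p l] ij l_def E_def by blast
    then have "card (extent (delete_link \<rho> l)) < card (extent \<rho>)" by (simp add: psubset_card_mono)
    then have eq: "\<Psi> v (delete_link \<rho> l) = expected_myerson v (delete_link \<rho> l)" using less.hyps pd by blast
    have e1: "equal_bargaining_at \<Psi> v \<rho>" using hyp inD[OF p] by blast
    have e2: "equal_bargaining_at expected_myerson v \<rho>" by (rule em_eb[OF p])
    have ijx: "{i, j} \<in> extent \<rho>" using ij E_def by simp
    have a1: "\<Psi> v \<rho> i - \<Psi> v (delete_link \<rho> l) i = \<Psi> v \<rho> j - \<Psi> v (delete_link \<rho> l) j"
      using e1 ij(1) ijx unfolding equal_bargaining_at_def l_def by blast
    have a2: "expected_myerson v \<rho> i - expected_myerson v (delete_link \<rho> l) i = expected_myerson v \<rho> j - expected_myerson v (delete_link \<rho> l) j"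
      using e2 ij(1) ijx unfolding equal_bargaining_at_def l_def by blast
    show ?thesis using a1 a2 eq unfolding \<Phi>_def by simp
  qed
  have path: "\<Phi> a = \<Phi> k" if "(k, a) \<in> (adj E)\<^sup>*" for k a
    using that
  proof (induction rule: rtrancl_induct)
    case (step y z)
    then have "y \<noteq> z" "{y, z} \<in> E" by (auto simp: adj_def)
    then have "\<Phi> z = \<Phi> y" using link by simp
    then show ?case using step.IH by simp
  qed simp
  show ?case
  proof
    fix i
    show "\<Psi> v \<rho> i = expected_myerson v \<rho> i"
    proof (cases "i \<in> isolated E")
      case True
      then show ?thesis using alloc game p em_alloc[OF p] unfolding allocation_rule_def E_def by simp
    next
      case False
      then have iE: "i \<in> players E" by (simp add: isolated_def)
      define h where "h = comp_of E i"
      have hc: "h \<in> components (extent \<rho>)" using iE h_def E_def by (auto simp: components_def)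
      have c1: "component_balanced_at \<Psi> v \<rho>" using hyp inD[OF p] by blast
      have c2: "component_balanced_at expected_myerson v \<rho>" by (rule em_cb[OF p ca game])
      have "(\<Sum>a\<in>players h. \<Psi> v \<rho> a) = (\<Sum>a\<in>players h. expected_myerson v \<rho> a)"
        using c1 c2 hc unfolding component_balanced_at_def by simp
      then have "(\<Sum>a\<in>players h. \<Phi> a) = 0" unfolding \<Phi>_def by (simp add: sum_subtractf)
      moreover have "(\<Sum>a\<in>players h. \<Phi> a) = (\<Sum>a\<in>players h. \<Phi> i)"
      proof (intro sum.cong refl)
        fix a assume "a \<in> players h"
        then have "(i, a) \<in> (adj E)\<^sup>*" using comp_reach[OF _ EgN] h_def by simp
        then show "\<Phi> a = \<Phi> i" by (rule path)
      qed
      ultimately have "real (card (players h)) * \<Phi> i = 0" by simp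
      moreover have "players h \<noteq> {}" using self_in_comp[OF iE] h_def by blast
      ultimately have "\<Phi> i = 0" by simp
      then show ?thesis by (simp add: \<Phi>_def)
    qed
  qed
qed

theorem mainTheorem1:
  shows "(allocation_rule (expected_myerson :: ('n::finite) rule)
          \<and> (\<forall>(v, \<rho>) \<in> (D :: (('n network \<Rightarrow> real) \<times> ('n network \<Rightarrow> real)) set).
               component_balanced_at expected_myerson v \<rho>
             \<and> equal_bargaining_at expected_myerson v \<rho>))
       \<and> (\<forall>\<Psi> :: 'n rule. allocation_rule \<Psi>
            \<and> (\<forall>(v, \<rho>) \<in> D. component_balanced_at \<Psi> v \<rho> \<and> equal_bargaining_at \<Psi> v \<rho>)
            \<longrightarrow> (\<forall>(v, \<rho>) \<in> D. \<Psi> v \<rho> = expected_myerson v \<rho>))"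
proof (intro conjI allI impI)
  show "allocation_rule (expected_myerson :: ('n::finite) rule)"
    unfolding allocation_rule_def using em_alloc by blast
  show "\<forall>(v, \<rho>) \<in> (D :: (('n network \<Rightarrow> real) \<times> ('n network \<Rightarrow> real)) set).
               component_balanced_at expected_myerson v \<rho>
             \<and> equal_bargaining_at expected_myerson v \<rho>"
  proof (clarify)
    fix v \<rho> assume "(v, \<rho>) \<in> (D :: (('n network \<Rightarrow> real) \<times> ('n network \<Rightarrow> real)) set)"
    then have "is_game v" "is_prob \<rho>" "component_additive v" by (auto simp: D_def)
    then show "component_balanced_at expected_myerson v \<rho> \<and> equal_bargaining_at expected_myerson v \<rho>"
      using em_cb em_eb by blast
  qed
  fix \<Psi> :: "'n rule"
  assume a: "allocation_rule \<Psi> \<and> (\<forall>(v, \<rho>) \<in> D. component_balanced_at \<Psi> v \<rho> \<and> equal_bargaining_at \<Psi> v \<rho>)"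
  show "\<forall>(v, \<rho>) \<in> D. \<Psi> v \<rho> = expected_myerson v \<rho>"
  proof (clarify)
    fix v \<rho> assume "(v, \<rho>) \<in> (D :: (('n network \<Rightarrow> real) \<times> ('n network \<Rightarrow> real)) set)"
    then have "is_game v" "is_prob \<rho>" "component_additive v" by (auto simp: D_def)
    then show "\<Psi> v \<rho> = expected_myerson v \<rho>" using uniq[of \<Psi> v \<rho>] a by simp
  qed
qed

end
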